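(* Let $G$ be a connected, nontraceable detour graph of order $n$. Then: (1) $G$ is $2$-connected (hence $\delta(G)\ge 2$); (2) every vertex of $G$ has at most one neighbour of degree $2$; (3) $G$ contains a longest path $P$ such that both endvertices of $P$ have degree at least $3$; (4) $\Delta(G)\le \tau(G)-4$; (5) if $T$ is the set of vertices of degree $2$ in $G$, then $|V(G)\setminus T|\ge |T|$; (6) $|E(G)|\ge \left\lceil \frac{5n}{4}\right\rceil$.
   Context: All graphs are finite and simple. The order of a path is its number of vertices. For a vertex $v$ of $G$, $\tau(v)$ is the order of a longest path in $G$ having $v$ as an endvertex, and $\tau(G)$ is the order of a longest path in $G$. A graph is traceable if it has a path containing all its vertices (a hamiltonian path), and nontraceable otherwise. A detour graph is a graph in which all vertices have the same value of $\tau(v)$. $\delta(G)$ and $\Delta(G)$ are the minimum and maximum degree. *)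

theory Defs
  imports Complex_Main
begin

definition sgraph :: "'a set \<Rightarrow> ('a \<Rightarrow> 'a \<Rightarrow> bool) \<Rightarrow> bool" where
  "sgraph V E \<longleftrightarrow> finite V \<and> (\<forall>x y. E x y \<longrightarrow> x \<in> V \<and> y \<in> V)
     \<and> (\<forall>x y. E x y \<longrightarrow> E y x) \<and> (\<forall>x. \<not> E x x)"

definition is_path :: "'a set \<Rightarrow> ('a \<Rightarrow> 'a \<Rightarrow> bool) \<Rightarrow> 'a list \<Rightarrow> bool" where
  "is_path V E p \<longleftrightarrow> p \<noteq> [] \<and> distinct p \<and> set p \<subseteq> V
     \<and> (\<forall>i. Suc i < length p \<longrightarrow> E (p ! i) (p ! Suc i))"

definition degree :: "'a set \<Rightarrow> ('a \<Rightarrow> 'a \<Rightarrow> bool) \<Rightarrow> 'a \<Rightarrow> nat" where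
  "degree V E v = card {u \<in> V. E v u}"

definition edges :: "'a set \<Rightarrow> ('a \<Rightarrow> 'a \<Rightarrow> bool) \<Rightarrow> 'a set set" where
  "edges V E = {{u, v} | u v. u \<in> V \<and> v \<in> V \<and> E u v}"

text \<open>tau v: order of a longest path having v as an endvertex (v as first vertex;
  paths can be reversed).\<close>
definition tau :: "'a set \<Rightarrow> ('a \<Rightarrow> 'a \<Rightarrow> bool) \<Rightarrow> 'a \<Rightarrow> nat" where
  "tau V E v = Max {length p | p. is_path V E p \<and> hd p = v}"

definition tauG :: "'a set \<Rightarrow> ('a \<Rightarrow> 'a \<Rightarrow> bool) \<Rightarrow> nat" where
  "tauG V E = Max {length p | p. is_path V E p}"

definition traceable :: "'a set \<Rightarrow> ('a \<Rightarrow> 'a \<Rightarrow> bool) \<Rightarrow> bool" where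
  "traceable V E \<longleftrightarrow> (\<exists>p. is_path V E p \<and> set p = V)"

definition detour_graph :: "'a set \<Rightarrow> ('a \<Rightarrow> 'a \<Rightarrow> bool) \<Rightarrow> bool" where
  "detour_graph V E \<longleftrightarrow> (\<forall>u\<in>V. \<forall>v\<in>V. tau V E u = tau V E v)"

definition connected_graph :: "'a set \<Rightarrow> ('a \<Rightarrow> 'a \<Rightarrow> bool) \<Rightarrow> bool" where
  "connected_graph V E \<longleftrightarrow> V \<noteq> {} \<and>
     (\<forall>u\<in>V. \<forall>v\<in>V. \<exists>p. is_path V E p \<and> hd p = u \<and> last p = v)"

definition delete_vertex :: "'a set \<Rightarrow> ('a \<Rightarrow> 'a \<Rightarrow> bool) \<Rightarrow> 'a \<Rightarrow> 'a set \<times> ('a \<Rightarrow> 'a \<Rightarrow> bool)" where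
  "delete_vertex V E x = (V - {x}, \<lambda>u v. E u v \<and> u \<noteq> x \<and> v \<noteq> x)"

definition two_connected :: "'a set \<Rightarrow> ('a \<Rightarrow> 'a \<Rightarrow> bool) \<Rightarrow> bool" where
  "two_connected V E \<longleftrightarrow> card V \<ge> 3 \<and> connected_graph V E \<and>
     (\<forall>x\<in>V. case_prod connected_graph (delete_vertex V E x))"

end

theory Submission
  imports Defs
begin


lemma is_path_succ:
  "is_path V E p \<longleftrightarrow> p \<noteq> [] \<and> distinct p \<and> set p \<subseteq> V \<and> successively E p"
  unfolding is_path_def successively_conv_nth by blast

lemma walk_to_path:
  assumes "R\<^sup>*\<^sup>* a b"
  shows "\<exists>p. p \<noteq> [] \<and> distinct p \<and> hd p = a \<and> last p = b \<and> successively R p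
     \<and> set p \<subseteq> {z. R\<^sup>*\<^sup>* a z}"
  using assms
proof (induction rule: rtranclp_induct)
  case base
  then show ?case by (intro exI[of _ "[a]"]) auto
next
  case (step y z)
  then obtain p where p: "p \<noteq> []" "distinct p" "hd p = a" "last p = y" "successively R p"
     "set p \<subseteq> {z. R\<^sup>*\<^sup>* a z}" by blast
  show ?case
  proof (cases "z \<in> set p")
    case True
    then obtain us ws where uw: "p = us @ z # ws" by (meson split_list)
    have "successively R (us @ [z])" using p(5) uw
      by (simp add: successively_append_iff)
    moreover have "hd (us @ [z]) = a" using p(3) uw by (cases us) auto
    ultimately show ?thesis using p uw
      by (intro exI[of _ "us @ [z]"]) auto
  next
    case False
    have "successively R (p @ [z])" using p step
      by (simp add: successively_append_iff)
    then show ?thesis using p step False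
      by (intro exI[of _ "p @ [z]"]) auto
  qed
qed

lemma succ_rtranclp:
  assumes "successively R p" "p \<noteq> []" "x \<in> set p"
  shows "R\<^sup>*\<^sup>* (hd p) x"
  using assms
proof (induction p rule: induct_list012)
  case (3 a b zs)
  then have "R a b" "successively R (b # zs)" by auto
  then show ?case using 3
    by (auto intro: converse_rtranclp_into_rtranclp)
qed auto

locale dg =
  fixes V :: "'a set" and E :: "'a \<Rightarrow> 'a \<Rightarrow> bool"
  assumes sg: "sgraph V E" and conn: "connected_graph V E"
    and nt: "\<not> traceable V E" and det: "detour_graph V E"
begin

lemma finV: "finite V" using sg by (simp add: sgraph_def)
lemma Ein: "E x y \<Longrightarrow> x \<in> V \<and> y \<in> V" using sg by (simp add: sgraph_def)
lemma Esym: "E x y \<Longrightarrow> E y x" using sg by (simp add: sgraph_def)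
lemma Eirr: "\<not> E x x" using sg by (simp add: sgraph_def)
lemma Esym': "(\<lambda>x y. E y x) = E" using Esym by (auto intro!: ext)
lemma Vne: "V \<noteq> {}" using conn by (simp add: connected_graph_def)

abbreviation "path p \<equiv> is_path V E p"
abbreviation "k \<equiv> tauG V E"
abbreviation "deg v \<equiv> degree V E v"

lemma path_rev: "path p \<Longrightarrow> path (rev p)"
  unfolding is_path_succ set_rev distinct_rev successively_rev Esym' by simp

lemma path_len: "path p \<Longrightarrow> length p \<le> card V"
  by (metis card_mono distinct_card finV is_path_def)

lemma fin_lens: "finite {length p | p. path p \<and> Q p}"
  by (rule finite_subset[of _ "{..card V}"]) (auto dest: path_len)

lemma tauG_ge: "path p \<Longrightarrow> length p \<le> k"
  unfolding tauG_def by (rule Max_ge[OF fin_lens[of "\<lambda>_. True", simplified]]) auto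

lemma tauG_ex: "\<exists>p. path p \<and> length p = k"
proof -
  obtain v where "v \<in> V" using Vne by auto
  then have "path [v]" by (simp add: is_path_def)
  then have "{length p | p. path p} \<noteq> {}" by auto
  from Max_in[OF fin_lens[of "\<lambda>_. True", simplified] this] show ?thesis
    unfolding tauG_def by auto
qed

lemma tau_ge: "path p \<Longrightarrow> length p \<le> tau V E (hd p)"
  unfolding tau_def by (rule Max_ge[OF fin_lens]) auto

lemma tau_ex: assumes "v \<in> V" shows "\<exists>p. path p \<and> hd p = v \<and> length p = tau V E v"
proof -
  have "path [v]" using assms by (simp add: is_path_def)
  then have "{length p | p. path p \<and> hd p = v} \<noteq> {}" by force
  from Max_in[OF fin_lens this] show ?thesis
    unfolding tau_def by auto
qed

lemma tau_eq: assumes "v \<in> V" shows "tau V E v = k"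
proof -
  obtain p where p: "path p" "length p = k" using tauG_ex by blast
  have hv: "hd p \<in> V" using p(1) unfolding is_path_def by (simp add: subset_iff)
  have "k \<le> tau V E (hd p)" using tau_ge[OF p(1)] p(2) by simp
  also have "\<dots> = tau V E v" using det hv assms unfolding detour_graph_def by blast
  finally have "k \<le> tau V E v" .
  moreover obtain q where "path q" "hd q = v" "length q = tau V E v" using tau_ex[OF assms] by blast
  ultimately show ?thesis using tauG_ge by force
qed

lemma longest_from: assumes "v \<in> V" shows "\<exists>p. path p \<and> hd p = v \<and> length p = k"
  using tau_ex[OF assms] tau_eq[OF assms] by auto

lemma k_lt: "k < card V"
proof -
  obtain p where p: "path p" "length p = k" using tauG_ex by blast
  have "k \<le> card V" using path_len[OF p(1)] p(2) by simp
  moreover have "k \<noteq> card V"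
  proof
    assume "k = card V"
    then have "set p = V" using p
      by (metis card_subset_eq distinct_card finV is_path_def)
    then show False using nt p unfolding traceable_def by blast
  qed
  ultimately show ?thesis by simp
qed

lemma nbr_on_path:
  assumes "path p" "length p = k" "E (hd p) w" shows "w \<in> set p"
proof (rule ccontr)
  assume "w \<notin> set p"
  then have "path (w # p)" using assms Ein Esym
    by (auto simp: is_path_succ successively_Cons)
  then show False using tauG_ge assms by fastforce
qed

lemma exists_cross:
  assumes "S \<subseteq> V" "S \<noteq> {}" "S \<noteq> V"
  shows "\<exists>x y. x \<in> V - S \<and> y \<in> S \<and> E x y"
proof -
  obtain w s where w: "w \<in> V - S" and s: "s \<in> S" using assms by blast
  then obtain q where q: "path q" "hd q = w" "last q = s"
    using conn assms unfolding connected_graph_def by blast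
  have "\<And>q. q \<noteq> [] \<Longrightarrow> successively E q \<Longrightarrow> hd q \<notin> S \<Longrightarrow> last q \<in> S \<Longrightarrow>
      \<exists>x y. x \<notin> S \<and> y \<in> S \<and> E x y"
  proof -
    fix q :: "'a list"
    show "q \<noteq> [] \<Longrightarrow> successively E q \<Longrightarrow> hd q \<notin> S \<Longrightarrow> last q \<in> S \<Longrightarrow>
      \<exists>x y. x \<notin> S \<and> y \<in> S \<and> E x y"
    proof (induction q rule: induct_list012)
      case (3 a b zs)
      then show ?case by (cases "b \<in> S") auto
    qed auto
  qed
  from this[of q] q w s obtain x y where "x \<notin> S" "y \<in> S" "E x y"
    by (auto simp: is_path_succ)
  then show ?thesis using Ein by blast
qed

lemma cycle_contra:
  assumes "path p" "length p = k" "E (hd p) (last p)" shows False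
proof -
  have "set p \<noteq> V" using assms k_lt
    by (metis distinct_card is_path_def less_irrefl)
  moreover have "set p \<noteq> {}" using assms by (simp add: is_path_def)
  moreover have "set p \<subseteq> V" using assms by (simp add: is_path_def)
  ultimately obtain w y where w: "w \<in> V - set p" "y \<in> set p" "E w y"
    using exists_cross by blast
  then obtain us ws where uw: "p = us @ y # ws" by (meson split_list)
  define q where "q = w # y # ws @ us"
  have sp: "successively E p" "distinct p" using assms by (auto simp: is_path_succ)
  have "successively E (y # ws @ us)"
  proof (cases "us = []")
    case True then show ?thesis using sp uw by simp
  next
    case False
    have "hd p = hd us" using False uw by simp
    moreover have "last p = last (y # ws)" using uw by simp
    ultimately have "E (last (y # ws)) (hd us)" using assms(3) Esym by metis
    then show ?thesis using sp uw False
      by (cases ws) (auto simp: successively_append_iff successively_Cons split: if_splits)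
  qed
  then have "path q" using w sp uw assms(1) unfolding q_def
    by (auto simp: is_path_succ successively_Cons)
  then show False using tauG_ge assms uw unfolding q_def by fastforce
qed

end


context dg
begin

lemma cardV3: "card V \<ge> 3"
proof (rule ccontr)
  assume "\<not> 3 \<le> card V"
  obtain x where x: "x \<in> V" using Vne by auto
  have "card V \<ge> 2" using k_lt tauG_ge[of "[x]"] x by (simp add: is_path_def)
  have "V - {x} \<noteq> {}"
  proof
    assume "V - {x} = {}"
    then have "card V \<le> card {x}" by (intro card_mono) auto
    then show False using \<open>card V \<ge> 2\<close> by simp
  qed
  then obtain y where y: "y \<in> V" "y \<noteq> x" by blast
  then obtain p where p: "path p" "hd p = x" "last p = y"
    using conn x unfolding connected_graph_def by blast
  have "length p \<ge> 2" using p y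
    by (cases p; cases "tl p") (auto simp: is_path_def)
  then show False using tauG_ge[OF p(1)] k_lt \<open>\<not> 3 \<le> card V\<close> by simp
qed

lemma has_nbr: assumes "x \<in> V" shows "\<exists>y. E x y"
proof -
  have "{x} \<noteq> V" using cardV3 by auto
  then obtain a b where "a \<in> V - {x}" "b \<in> {x}" "E a b" using exists_cross[of "{x}"] assms by blast
  then show ?thesis using Esym by blast
qed

lemma k_ge2: "k \<ge> 2"
proof -
  obtain x where x: "x \<in> V" using Vne by auto
  then obtain y where "E x y" using has_nbr by blast
  then have "path [x, y]" using Ein Eirr by (auto simp: is_path_def nth_Cons split: nat.splits)
  then show ?thesis using tauG_ge by fastforce
qed

lemma del_conn: assumes x: "x \<in> V" shows "connected_graph (V - {x}) (\<lambda>u v. E u v \<and> u \<noteq> x \<and> v \<noteq> x)"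
proof -
  define E' where "E' = (\<lambda>u v. E u v \<and> u \<noteq> x \<and> v \<noteq> x)"
  have symE': "symp E'" unfolding E'_def symp_def using Esym by blast
  have symR: "E'\<^sup>*\<^sup>* a b \<Longrightarrow> E'\<^sup>*\<^sup>* b a" for a b using sympD[OF symp_rtranclp[OF symE']] by blast
  have mono: "successively E q \<Longrightarrow> x \<notin> set q \<Longrightarrow> successively E' q" for q
    by (erule successively_mono) (auto simp: E'_def)
  have reach: "E'\<^sup>*\<^sup>* u v" if u: "u \<in> V - {x}" and v: "v \<in> V - {x}" for u v
  proof (rule ccontr)
    assume nuv: "\<not> E'\<^sup>*\<^sup>* u v"
    obtain Q where Q: "path Q" "hd Q = x" "length Q = k" using longest_from[OF x] by blast
    obtain qs where qs: "Q = x # qs" using Q by (cases Q) (auto simp: is_path_def)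
    have "qs \<noteq> []" using qs Q k_ge2 by auto
    have xqs: "x \<notin> set qs" "successively E qs" "distinct qs" using Q qs by (auto simp: is_path_succ successively_Cons)
    define c where "c = hd qs"
    have qc: "z \<in> set qs \<Longrightarrow> E'\<^sup>*\<^sup>* c z" for z
      unfolding c_def using succ_rtranclp[OF mono[OF xqs(2) xqs(1)] \<open>qs \<noteq> []\<close>] by blast
    obtain w where w: "w \<in> V - {x}" "\<not> E'\<^sup>*\<^sup>* w c"
    proof (cases "E'\<^sup>*\<^sup>* u c")
      case True
      then have "\<not> E'\<^sup>*\<^sup>* v c" using nuv symR by (meson rtranclp_trans)
      then show ?thesis using that v by blast
    next
      case False then show ?thesis using that u by blast
    qed
    obtain q where q: "path q" "hd q = w" "last q = x" using conn w x unfolding connected_graph_def by blast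
    define r where "r = butlast q"
    have qr: "q = r @ [x]" using q unfolding r_def by (metis append_butlast_last_id is_path_def)
    have "r \<noteq> []" using qr q w by auto
    have rx: "x \<notin> set r" "distinct r" "successively E r" "E (last r) x" "hd r = w"
      using q qr \<open>r \<noteq> []\<close> by (auto simp: is_path_succ successively_append_iff)
    have rw: "z \<in> set r \<Longrightarrow> E'\<^sup>*\<^sup>* w z" for z
      using succ_rtranclp[OF mono[OF rx(3) rx(1)] \<open>r \<noteq> []\<close>] rx(5) by blast
    have disj: "set r \<inter> set qs = {}"
    proof (rule ccontr)
      assume "set r \<inter> set qs \<noteq> {}"
      then obtain z where "z \<in> set r" "z \<in> set qs" by blast
      then have "E'\<^sup>*\<^sup>* w z" "E'\<^sup>*\<^sup>* c z" using rw qc by auto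
      then show False using w symR by (meson rtranclp_trans)
    qed
    have "path (r @ Q)"
      using rx disj xqs Q q qr \<open>r \<noteq> []\<close>
      by (auto simp: is_path_succ successively_append_iff qs)
    then show False using tauG_ge Q \<open>r \<noteq> []\<close> by fastforce
  qed
  have inV: "E'\<^sup>*\<^sup>* u z \<Longrightarrow> u \<in> V - {x} \<Longrightarrow> z \<in> V - {x}" for u z
    by (induction rule: rtranclp_induct) (auto simp: E'_def dest: Ein)
  show ?thesis unfolding E'_def[symmetric] connected_graph_def
  proof (intro conjI ballI)
    show "V - {x} \<noteq> {}"
    proof
      assume "V - {x} = {}"
      then have "card V \<le> card {x}" by (intro card_mono) auto
      then show False using cardV3 by simp
    qed
  next
    fix u v assume u: "u \<in> V - {x}" and v: "v \<in> V - {x}"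
    obtain p where p: "p \<noteq> []" "distinct p" "hd p = u" "last p = v" "successively E' p"
      "set p \<subseteq> {z. E'\<^sup>*\<^sup>* u z}" using walk_to_path[OF reach[OF u v]] by blast
    have "set p \<subseteq> V - {x}" using p(6) inV u by blast
    then show "\<exists>p. is_path (V - {x}) E' p \<and> hd p = u \<and> last p = v"
      using p by (auto simp: is_path_succ)
  qed
qed

lemma two_conn: "two_connected V E"
  unfolding two_connected_def delete_vertex_def using cardV3 conn del_conn by auto

lemma deg_ge2: assumes v: "v \<in> V" shows "deg v \<ge> 2"
proof -
  obtain y where y: "E v y" using has_nbr v by blast
  have "V - {v, y} \<noteq> {}"
  proof
    assume "V - {v, y} = {}"
    then have "V \<subseteq> {v, y}" by auto
    then have "card V \<le> card {v, y}" by (intro card_mono) auto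
    also have "\<dots> \<le> 2" by (simp add: card_insert_if)
    finally have "card V \<le> 2" .
    then show False using cardV3 by simp
  qed
  then obtain z where z: "z \<in> V" "z \<noteq> v" "z \<noteq> y" by blast
  have yV: "y \<in> V" using Ein y by blast
  then have "v \<in> V - {y}" "z \<in> V - {y}" using v z y Eirr by auto
  then obtain p where p: "is_path (V - {y}) (\<lambda>a b. E a b \<and> a \<noteq> y \<and> b \<noteq> y) p" "hd p = v" "last p = z"
    using del_conn[OF yV] unfolding connected_graph_def by blast
  then obtain b rest where "p = v # b # rest"
    using z by (cases p; cases "tl p") (auto simp: is_path_def)
  then have "E v b" "b \<noteq> y" using p by (auto simp: is_path_succ)
  then have "{y, b} \<subseteq> {u \<in> V. E v u}" using y Ein by auto
  moreover have "finite {u \<in> V. E v u}" using finV by simp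
  ultimately have "card {y, b} \<le> deg v" unfolding degree_def by (rule card_mono[rotated])
  then show ?thesis using \<open>b \<noteq> y\<close> by simp
qed

end


context dg
begin

lemma deg_mono: assumes "S \<subseteq> {u \<in> V. E a u}" shows "card S \<le> deg a"
  unfolding degree_def using assms finV by (intro card_mono) auto

lemma three_nbrs:
  assumes "E a x" "E a y" "E a z" "x \<noteq> y" "x \<noteq> z" "y \<noteq> z"
  shows "deg a \<ge> 3"
proof -
  have "card {x, y, z} \<le> deg a" using assms Ein by (intro deg_mono) auto
  then show ?thesis using assms by simp
qed

lemma pos_deg2:
  assumes P: "path P" "length P = k" "P = v # ys" and a: "E v a" "deg a = 2"
  shows "a = hd ys \<or> a = last ys"
proof -
  have "a \<in> set P" using nbr_on_path[OF P(1) P(2)] P(3) a by simp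
  moreover have "a \<noteq> v" using a Eirr by auto
  ultimately have "a \<in> set ys" using P by simp
  then obtain us ws where uw: "ys = us @ a # ws" by (meson split_list)
  show ?thesis
  proof (rule ccontr)
    assume "\<not> ?thesis"
    then have ne: "us \<noteq> []" "ws \<noteq> []" using uw by auto
    have d: "distinct P" "successively E P" using P by (auto simp: is_path_succ)
    have e0: "E (last us) a" "E a (hd ws)"
      using d(2) uw P ne by (auto simp: successively_append_iff successively_Cons)
    have e3: "E a (last us)" "E a (hd ws)" using e0 Esym by blast+
    have lh: "last us \<in> set us" "hd ws \<in> set ws" using ne by auto
    have dj: "set us \<inter> set ws = {}" "v \<notin> set us" "v \<notin> set ws" using d(1) uw P by auto
    have "v \<noteq> last us" using lh(1) dj(2) by auto
    moreover have "v \<noteq> hd ws" using lh(2) dj(3) by auto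
    moreover have "last us \<noteq> hd ws" using lh dj(1) by (auto simp: disjoint_iff)
    ultimately have "deg a \<ge> 3" using three_nbrs[OF Esym[OF a(1)] e3] by blast
    then show False using a by simp
  qed
qed

lemma at_most_one: assumes v: "v \<in> V" shows "card {u \<in> V. E v u \<and> deg u = 2} \<le> 1"
proof -
  have fin: "finite {u \<in> V. E v u \<and> deg u = 2}" using finV by simp
  show ?thesis unfolding One_nat_def card_le_Suc0_iff_eq[OF fin]
  proof (intro ballI, rule ccontr)
    fix a b assume a: "a \<in> {u \<in> V. E v u \<and> deg u = 2}" and b: "b \<in> {u \<in> V. E v u \<and> deg u = 2}"
      and ab: "a \<noteq> b"
    obtain P where P: "path P" "hd P = v" "length P = k" using longest_from[OF v] by blast
    then obtain ys where ys: "P = v # ys" by (cases P) (auto simp: is_path_def)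
    have "a = hd ys \<or> a = last ys" "b = hd ys \<or> b = last ys"
      using pos_deg2[OF P(1) P(3) ys] a b by auto
    then have "E v (last ys)" using a b ab by auto
    moreover have "ys \<noteq> []" using ys P k_ge2 by auto
    ultimately have "E (hd P) (last P)" using ys by simp
    then show False using cycle_contra P by blast
  qed
qed

lemma rot:
  assumes P: "path P" "length P = k" "deg (hd P) = 2"
  shows "\<exists>P'. path P' \<and> length P' = k \<and> deg (hd P') \<ge> 3 \<and> last P' = last P"
proof -
  obtain a ys where ys: "P = a # ys" using P by (cases P) (auto simp: is_path_def)
  have "ys \<noteq> []" using ys P k_ge2 by auto
  have d: "distinct P" "successively E P" "set P \<subseteq> V" using P by (auto simp: is_path_succ)
  have ah: "E a (hd ys)" using d ys \<open>ys \<noteq> []\<close> by (simp add: successively_Cons)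
  have "{u \<in> V. E a u} - {hd ys} \<noteq> {}"
  proof
    assume "{u \<in> V. E a u} - {hd ys} = {}"
    then have "card {u \<in> V. E a u} \<le> card {hd ys}" by (intro card_mono) auto
    then show False using P ys unfolding degree_def by simp
  qed
  then obtain y where y: "E a y" "y \<noteq> hd ys" by blast
  have "y \<in> set P" using nbr_on_path[OF P(1) P(2)] y ys by simp
  moreover have "y \<noteq> a" using y Eirr by auto
  ultimately have "y \<in> set ys" using ys by simp
  then obtain us ws where uw: "ys = us @ y # ws" by (meson split_list)
  have "us \<noteq> []" using uw y by auto
  define P' where "P' = rev us @ a # y # ws"
  have luy: "E (last us) y" using d(2) ys uw \<open>us \<noteq> []\<close>
    by (auto simp: successively_append_iff successively_Cons)
  have "hd us = hd ys" using uw \<open>us \<noteq> []\<close> by simp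
  have "path P'" unfolding P'_def is_path_succ
  proof (intro conjI)
    show "distinct (rev us @ a # y # ws)" using d(1) ys uw by auto
    show "set (rev us @ a # y # ws) \<subseteq> V" using d(3) ys uw by auto
    have "successively E us" "successively E (y # ws)" using d(2) ys uw
      by (auto simp: successively_append_iff successively_Cons)
    moreover have "successively E (rev us)" using \<open>successively E us\<close>
      unfolding successively_rev Esym' .
    ultimately show "successively E (rev us @ a # y # ws)"
      using \<open>us \<noteq> []\<close> ah \<open>hd us = hd ys\<close> y Esym
      by (simp add: successively_append_iff Esym' last_rev)
  qed auto
  have lenP': "length P' = k" using P ys uw unfolding P'_def by simp
  have lastP': "last P' = last P" using ys uw unfolding P'_def by simp
  have hdP': "hd P' = last us" using \<open>us \<noteq> []\<close> unfolding P'_def by (simp add: hd_rev)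
  have lV: "last us \<in> V" using luy Ein by blast
  have "deg (last us) \<noteq> 2"
  proof
    assume l2: "deg (last us) = 2"
    have yV: "y \<in> V" using y Ein by blast
    have "a \<noteq> last us" using d(1) ys uw \<open>us \<noteq> []\<close> by auto
    moreover have "a \<in> {u \<in> V. E y u \<and> deg u = 2}" "last us \<in> {u \<in> V. E y u \<and> deg u = 2}"
      using Esym[OF y(1)] Esym[OF luy] Ein[OF y(1)] lV P(3) ys l2 by auto
    ultimately have "\<not> card {u \<in> V. E y u \<and> deg u = 2} \<le> 1"
      using finV by (subst One_nat_def, subst card_le_Suc0_iff_eq) auto
    then show False using at_most_one yV by blast
  qed
  then have "deg (last us) \<ge> 3" using deg_ge2[OF lV] by simp
  then show ?thesis using \<open>path P'\<close> lenP' lastP' hdP' by auto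
qed

lemma rot':
  assumes P: "path P" "length P = k"
  shows "\<exists>P'. path P' \<and> length P' = k \<and> deg (hd P') \<ge> 3 \<and> last P' = last P"
proof (cases "deg (hd P) = 2")
  case True then show ?thesis using rot P by blast
next
  case False
  have "hd P \<in> V" using P by (auto simp: is_path_def)
  then have "deg (hd P) \<ge> 3" using False deg_ge2 by fastforce
  then show ?thesis using P by blast
qed

lemma part3: "\<exists>P. path P \<and> length P = k \<and> deg (hd P) \<ge> 3 \<and> deg (last P) \<ge> 3"
proof -
  obtain P where "path P" "length P = k" using tauG_ex by blast
  then obtain P1 where P1: "path P1" "length P1 = k" "deg (hd P1) \<ge> 3" using rot' by blast
  have "path (rev P1)" "length (rev P1) = k" using P1 path_rev by auto
  then obtain P2 where P2: "path P2" "length P2 = k" "deg (hd P2) \<ge> 3" "last P2 = last (rev P1)"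
    using rot' by blast
  have "P1 \<noteq> []" using P1 by (simp add: is_path_def)
  then have "last P2 = hd P1" using P2 by (simp add: last_rev)
  then show ?thesis using P1 P2 by auto
qed

end


lemma card_two_le: "card {x, y} \<le> 2"
  by (cases "x = y") auto

context dg
begin

lemma part4: assumes v: "v \<in> V" shows "deg v + 4 \<le> k"
proof -
  obtain P where P: "path P" "hd P = v" "length P = k" using longest_from[OF v] by blast
  have "P \<noteq> []" using P by (simp add: is_path_def)
  have "path (rev P)" "length (rev P) = k" using P path_rev by auto
  then obtain P1 where P1: "path P1" "length P1 = k" "deg (hd P1) \<ge> 3" "last P1 = last (rev P)"
    using rot' by blast
  define Q where "Q = rev P1"
  have "P1 \<noteq> []" using P1 by (simp add: is_path_def)
  have Q: "path Q" "length Q = k" "hd Q = v" "deg (last Q) \<ge> 3"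
    using P1 path_rev \<open>P1 \<noteq> []\<close> \<open>P \<noteq> []\<close> P unfolding Q_def by (auto simp: last_rev hd_rev)
  have dQ: "distinct Q" "successively E Q" "set Q \<subseteq> V" "Q \<noteq> []" using Q by (auto simp: is_path_succ)
  have k2: "k \<ge> 2" by (rule k_ge2)
  have q0: "Q ! 0 = v" using Q dQ by (simp add: hd_conv_nth)
  have ql: "Q ! (k - 1) = last Q" using Q dQ by (simp add: last_conv_nth)
  define l where "l = last Q"
  define SA where "SA = {j. j < k - 1 \<and> E v (Q ! Suc j)}"
  define SB where "SB = {j. j < k - 1 \<and> E l (Q ! j)}"
  have inj: "inj_on (\<lambda>i. Q ! i) {..<k}" using dQ Q by (simp add: inj_on_nth)
  have cardA: "deg v = card SA"
  proof -
    have "{u \<in> V. E v u} = (\<lambda>j. Q ! Suc j) ` SA"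
    proof
      show "(\<lambda>j. Q ! Suc j) ` SA \<subseteq> {u \<in> V. E v u}"
        using dQ Q nth_mem unfolding SA_def by fastforce
    next
      show "{u \<in> V. E v u} \<subseteq> (\<lambda>j. Q ! Suc j) ` SA"
      proof
        fix u assume u: "u \<in> {u \<in> V. E v u}"
        then have "u \<in> set Q" using nbr_on_path[OF Q(1) Q(2)] Q(3) by auto
        then obtain i where i: "i < k" "Q ! i = u" using Q by (auto simp: in_set_conv_nth)
        have "i \<noteq> 0"
        proof
          assume "i = 0" then have "u = v" using i q0 by simp
          then show False using u Eirr by auto
        qed
        then obtain j where "i = Suc j" by (cases i) auto
        then show "u \<in> (\<lambda>j. Q ! Suc j) ` SA" using i u unfolding SA_def by auto
      qed
    qed
    moreover have "inj_on (\<lambda>j. Q ! Suc j) SA"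
    proof (rule inj_onI)
      fix x y assume xy: "x \<in> SA" "y \<in> SA" "Q ! Suc x = Q ! Suc y"
      then have "Suc x \<in> {..<k}" "Suc y \<in> {..<k}" unfolding SA_def by auto
      then have "Suc x = Suc y" using inj xy(3) unfolding inj_on_def by blast
      then show "x = y" by simp
    qed
    ultimately show ?thesis unfolding degree_def by (simp add: card_image)
  qed
  have cardB: "deg l = card SB"
  proof -
    have "{u \<in> V. E l u} = (\<lambda>j. Q ! j) ` SB"
    proof
      show "(\<lambda>j. Q ! j) ` SB \<subseteq> {u \<in> V. E l u}"
        using dQ Q nth_mem unfolding SB_def by fastforce
    next
      show "{u \<in> V. E l u} \<subseteq> (\<lambda>j. Q ! j) ` SB"
      proof
        fix u assume u: "u \<in> {u \<in> V. E l u}"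
        have "path (rev Q)" "length (rev Q) = k" "hd (rev Q) = l"
          using path_rev Q dQ unfolding l_def by (auto simp: hd_rev)
        then have "u \<in> set Q" using nbr_on_path[of "rev Q" u] u by auto
        then obtain i where i: "i < k" "Q ! i = u" using Q by (auto simp: in_set_conv_nth)
        have "i \<noteq> k - 1" using i ql u Eirr unfolding l_def by auto
        then show "u \<in> (\<lambda>j. Q ! j) ` SB" using i u unfolding SB_def by auto
      qed
    qed
    moreover have "inj_on (\<lambda>j. Q ! j) SB"
      using inj unfolding SB_def inj_on_def by auto
    ultimately show ?thesis unfolding degree_def by (simp add: card_image)
  qed
  have disj: "SA \<inter> SB = {}"
  proof (rule ccontr)
    assume "SA \<inter> SB \<noteq> {}"
    then obtain j where j: "j < k - 1" "E v (Q ! Suc j)" "E l (Q ! j)" unfolding SA_def SB_def by auto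
    define xs where "xs = take (Suc j) Q"
    define ys where "ys = drop (Suc j) Q"
    have Qxy: "Q = xs @ ys" unfolding xs_def ys_def by simp
    have jk: "j < length Q" using j Q by simp
    have lx: "last xs = Q ! j" "xs \<noteq> []" using take_Suc_conv_app_nth[OF jk] unfolding xs_def
      by auto
    have hy: "hd ys = Q ! Suc j" "ys \<noteq> []" using j Q unfolding ys_def
      by (auto simp: hd_drop_conv_nth)
    have ly: "last ys = l" using hy Qxy unfolding l_def by simp
    have hx: "hd xs = v" using lx Qxy Q by simp
    define C where "C = xs @ rev ys"
    have sx: "successively E xs" "successively E ys" using dQ Qxy by (auto simp: successively_append_iff)
    have sry: "successively E (rev ys)" using sx(2) unfolding successively_rev Esym' .
    have "E (Q ! j) l" using j Esym by blast
    then have "path C" unfolding C_def is_path_succ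
      using dQ Qxy sx sry lx hy ly by (auto simp: successively_append_iff last_rev hd_rev)
    moreover have "length C = k" using Q Qxy unfolding C_def by simp
    moreover have "hd C = v" "last C = Q ! Suc j" using hx lx hy unfolding C_def by (auto simp: last_rev)
    ultimately show False using cycle_contra j by metis
  qed
  have "SA \<union> SB \<subseteq> {..<k - 1}" unfolding SA_def SB_def by auto
  then have "card (SA \<union> SB) \<le> k - 1" by (metis card_lessThan card_mono finite_lessThan)
  moreover have "card (SA \<union> SB) = card SA + card SB"
    using disj by (intro card_Un_disjoint) (auto simp: SA_def SB_def)
  moreover have "card SB \<ge> 3" using cardB Q unfolding l_def by simp
  ultimately show ?thesis using cardA k2 by linarith
qed

lemma part5: "card {v \<in> V. deg v = 2} \<le> card (V - {v \<in> V. deg v = 2})"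
proof -
  define T where "T = {v \<in> V. deg v = 2}"
  define f where "f t = (SOME u. u \<in> V \<and> E t u \<and> deg u \<noteq> 2)" for t
  have fT: "f t \<in> V \<and> E t (f t) \<and> deg (f t) \<noteq> 2" if t: "t \<in> T" for t
  proof -
    have tV: "t \<in> V" using t unfolding T_def by simp
    have "{u \<in> V. E t u} - {u \<in> V. E t u \<and> deg u = 2} \<noteq> {}"
    proof
      assume "{u \<in> V. E t u} - {u \<in> V. E t u \<and> deg u = 2} = {}"
      then have "card {u \<in> V. E t u} \<le> card {u \<in> V. E t u \<and> deg u = 2}"
        using finV by (intro card_mono) auto
      moreover have "card {u \<in> V. E t u} = 2" using t unfolding T_def degree_def by simp
      ultimately show False using at_most_one[OF tV] by linarith
    qed
    then have "\<exists>u. u \<in> V \<and> E t u \<and> deg u \<noteq> 2" by blast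
    then show ?thesis unfolding f_def by (rule someI_ex)
  qed
  have "inj_on f T"
  proof (rule inj_onI)
    fix a b assume a: "a \<in> T" and b: "b \<in> T" and e: "f a = f b"
    define w where "w = f a"
    have wV: "w \<in> V" using fT[OF a] unfolding w_def by simp
    have "E a w" "E b w" using fT[OF a] fT[OF b] e unfolding w_def by auto
    then have "E w a" "E w b" using Esym by blast+
    then have "a \<in> {u \<in> V. E w u \<and> deg u = 2}" "b \<in> {u \<in> V. E w u \<and> deg u = 2}"
      using a b unfolding T_def by auto
    moreover have fin: "finite {u \<in> V. E w u \<and> deg u = 2}" using finV by simp
    moreover have "card {u \<in> V. E w u \<and> deg u = 2} \<le> Suc 0" using at_most_one[OF wV] by simp
    ultimately show "a = b" using card_le_Suc0_iff_eq[OF fin] by blast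
  qed
  moreover have "f ` T \<subseteq> V - T" using fT unfolding T_def by auto
  ultimately have "card T \<le> card (V - T)" using finV by (intro card_inj_on_le) auto
  then show ?thesis unfolding T_def .
qed

lemma handshake: "(\<Sum>v\<in>V. deg v) \<le> 2 * card (edges V E)"
proof -
  define D where "D = Sigma V (\<lambda>u. {w \<in> V. E u w})"
  have finE: "finite (edges V E)"
    by (rule finite_subset[of _ "Pow V"]) (auto simp: edges_def finV)
  have "card D = (\<Sum>v\<in>V. deg v)" unfolding D_def degree_def using finV by simp
  define F where "F e = {p \<in> D. {fst p, snd p} = e}" for e
  have "D \<subseteq> (\<Union>e\<in>edges V E. F e)"
  proof
    fix p assume p: "p \<in> D"
    have "fst p \<in> V" "snd p \<in> V" "E (fst p) (snd p)" using p unfolding D_def by auto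
    then have "\<exists>u v. {fst p, snd p} = {u, v} \<and> u \<in> V \<and> v \<in> V \<and> E u v"
      by (intro exI[of _ "fst p"] exI[of _ "snd p"]) simp
    then have "{fst p, snd p} \<in> edges V E" unfolding edges_def by (rule CollectI)
    moreover have "p \<in> F {fst p, snd p}" using p unfolding F_def by simp
    ultimately show "p \<in> (\<Union>e\<in>edges V E. F e)" by blast
  qed
  moreover have "finite (\<Union>e\<in>edges V E. F e)"
  proof (rule finite_subset)
    show "(\<Union>e\<in>edges V E. F e) \<subseteq> D" unfolding F_def by blast
    show "finite D" unfolding D_def using finV by simp
  qed
  ultimately have "card D \<le> card (\<Union>e\<in>edges V E. F e)" by (rule card_mono[rotated])
  also have "\<dots> \<le> (\<Sum>e\<in>edges V E. card (F e))" by (rule card_UN_le[OF finE])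
  also have "\<dots> \<le> (\<Sum>e\<in>edges V E. 2)"
  proof (rule sum_mono)
    fix e assume "e \<in> edges V E"
    then have "\<exists>u v. e = {u, v} \<and> u \<in> V \<and> v \<in> V \<and> E u v" unfolding edges_def by (rule CollectD)
    then obtain a b where e: "e = {a, b}" by (elim exE conjE)
    have "F e \<subseteq> {(a, b), (b, a)}"
    proof
      fix p assume "p \<in> F e"
      then have "{fst p, snd p} = {a, b}" unfolding F_def e by simp
      then have "p = (a, b) \<or> p = (b, a)" unfolding doubleton_eq_iff by (cases p) auto
      then show "p \<in> {(a, b), (b, a)}" by simp
    qed
    then have "card (F e) \<le> card {(a, b), (b, a)}" by (intro card_mono) auto
    also have "\<dots> \<le> 2" by (rule card_two_le)
    finally show "card (F e) \<le> 2" .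
  qed
  finally show ?thesis using \<open>card D = _\<close> by simp
qed

lemma part6: "4 * card (edges V E) \<ge> 5 * card V"
proof -
  define T where "T = {v \<in> V. deg v = 2}"
  have TV: "T \<subseteq> V" unfolding T_def by auto
  have "(\<Sum>v\<in>V. deg v) = (\<Sum>v\<in>V - T. deg v) + (\<Sum>v\<in>T. deg v)"
    by (rule sum.subset_diff[OF TV finV])
  moreover have "(\<Sum>v\<in>T. deg v) = 2 * card T" unfolding T_def by simp
  moreover have "card (V - T) * 3 \<le> (\<Sum>v\<in>V - T. deg v)"
  proof -
    have "\<And>v. v \<in> V - T \<Longrightarrow> 3 \<le> deg v" using deg_ge2 unfolding T_def by fastforce
    then show ?thesis using sum_bounded_below[of "V - T" 3 "\<lambda>v. deg v"] by simp
  qed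
  moreover have "card V = card (V - T) + card T"
  proof -
    have "card (V - T) = card V - card T" by (rule card_Diff_subset[OF finite_subset[OF TV finV] TV])
    moreover have "card T \<le> card V" by (rule card_mono[OF finV TV])
    ultimately show ?thesis by simp
  qed
  moreover have "card T \<le> card (V - T)" using part5 unfolding T_def .
  ultimately show ?thesis using handshake by linarith
qed

end

lemma main:
  assumes "sgraph V E" and "connected_graph V E" and "\<not> traceable V E"
    and "detour_graph V E" and "n = card V"
  shows "(two_connected V E \<and> (\<forall>v\<in>V. degree V E v \<ge> 2))
    \<and> (\<forall>v\<in>V. card {u \<in> V. E v u \<and> degree V E u = 2} \<le> 1)
    \<and> (\<exists>P. is_path V E P \<and> length P = tauG V E
           \<and> degree V E (hd P) \<ge> 3 \<and> degree V E (last P) \<ge> 3)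
    \<and> (\<forall>v\<in>V. degree V E v + 4 \<le> tauG V E)
    \<and> (\<forall>T. T = {v \<in> V. degree V E v = 2} \<longrightarrow> card (V - T) \<ge> card T)
    \<and> int (card (edges V E)) \<ge> \<lceil>5 * real n / 4\<rceil>"
proof -
  interpret dg V E using assms by (simp add: dg_def)
  have "5 * real n / 4 \<le> real (card (edges V E))"
    using part6 assms(5) by (simp add: field_simps)
  then have c: "\<lceil>5 * real n / 4\<rceil> \<le> int (card (edges V E))"
    by (simp add: ceiling_le_iff)
  have p5: "\<forall>T. T = {v \<in> V. degree V E v = 2} \<longrightarrow> card (V - T) \<ge> card T"
    using part5 by blast
  show ?thesis
    apply (intro conjI)
    subgoal by (rule two_conn)
    subgoal using deg_ge2 by blast
    subgoal using at_most_one by blast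
    subgoal by (rule part3)
    subgoal using part4 by blast
    subgoal by (rule p5)
    subgoal by (rule c)
    done
qed


theorem theorem2p2:
  fixes V :: "'a set" and E :: "'a \<Rightarrow> 'a \<Rightarrow> bool" and n :: nat
  assumes "sgraph V E" and "connected_graph V E" and "\<not> traceable V E"
    and "detour_graph V E" and "n = card V"
  shows "(two_connected V E \<and> (\<forall>v\<in>V. degree V E v \<ge> 2))
    \<and> (\<forall>v\<in>V. card {u \<in> V. E v u \<and> degree V E u = 2} \<le> 1)
    \<and> (\<exists>P. is_path V E P \<and> length P = tauG V E
           \<and> degree V E (hd P) \<ge> 3 \<and> degree V E (last P) \<ge> 3)
    \<and> (\<forall>v\<in>V. degree V E v + 4 \<le> tauG V E)
    \<and> (\<forall>T. T = {v \<in> V. degree V E v = 2} \<longrightarrow> card (V - T) \<ge> card T)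
    \<and> int (card (edges V E)) \<ge> \<lceil>5 * real n / 4\<rceil>"
  using assms by (rule main)

end
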